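(* Let $N\ge2$, $1<p<N$, and let $\alpha_n$, $\varepsilon_n$ be sequences with $\alpha_n\to\alpha>0$ and $\varepsilon_n\to0$ as $n\to+\infty$. Let $u_n:=u_{\varepsilon_n,\alpha_n}$. Then $\|u_n-U_\alpha\|_X\to0$ as $n\to+\infty$.
   Context: $U_\alpha(x)=C_{N,p,\alpha}(1+|x|^{\frac{p+\alpha}{p-1}})^{-\frac{N-p}{p+\alpha}}$ with $C_{N,p,\alpha}=\big((N+\alpha)(\frac{N-p}{p-1})^{p-1}\big)^{\frac{N-p}{p(p+\alpha)}}$. For $\varepsilon>0$, $u_{\varepsilon,\alpha}(x):=U_\alpha(x)-U_\alpha(1/\varepsilon)$ if $|x|\le1/\varepsilon$ and $u_{\varepsilon,\alpha}(x):=0$ if $|x|>1/\varepsilon$, where $U_\alpha(1/\varepsilon)$ is the value of $U_\alpha$ at $|x|=1/\varepsilon$. Fix $\gamma\in\big(\frac{N(N-p)}{Np-(N-p)},\frac{N-p}{p-1}\big)$, $\|g\|_\gamma:=\sup_{x}(1+|x|)^\gamma|g(x)|$, $X:=\{g\in D^{1,p}(\mathbb{R}^N)\cap L^\infty(\mathbb{R}^N):\|g\|_\gamma<\infty\}$ with $\|g\|_X=\max\{\|\nabla g\|_{L^p(\mathbb{R}^N)},\|g\|_\gamma\}$; $D^{1,p}(\mathbb{R}^N)$ is the completion of $C_c^\infty$ under $\|\nabla g\|_{L^p}$. *)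

theory Defs
  imports "HOL-Analysis.Analysis"
begin

definition C_const :: "real \<Rightarrow> real \<Rightarrow> real \<Rightarrow> real" where
  "C_const N p \<alpha> =
     ((N + \<alpha>) * ((N - p) / (p - 1)) powr (p - 1)) powr ((N - p) / (p * (p + \<alpha>)))"

definition U_prof :: "real \<Rightarrow> real \<Rightarrow> real \<Rightarrow> real \<Rightarrow> real" where
  "U_prof N p \<alpha> r =
     C_const N p \<alpha> * (1 + r powr ((p + \<alpha>) / (p - 1))) powr (- (N - p) / (p + \<alpha>))"

definition U_fun :: "real \<Rightarrow> real \<Rightarrow> real \<Rightarrow> real ^ 'n \<Rightarrow> real" where
  "U_fun N p \<alpha> x = U_prof N p \<alpha> (norm x)"

definition u_trunc :: "real \<Rightarrow> real \<Rightarrow> real \<Rightarrow> real \<Rightarrow> real ^ 'n \<Rightarrow> real" where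
  "u_trunc N p \<epsilon> \<alpha> x =
     (if norm x \<le> 1 / \<epsilon> then U_prof N p \<alpha> (norm x) - U_prof N p \<alpha> (1 / \<epsilon>) else 0)"

text \<open>Pointwise gradient (where it exists; for the Lipschitz functions considered
  here it coincides a.e. with the weak gradient).\<close>
definition grad :: "(real ^ 'n \<Rightarrow> real) \<Rightarrow> real ^ 'n \<Rightarrow> real ^ 'n" where
  "grad g x = (SOME G. (g has_derivative (\<lambda>h. G \<bullet> h)) (at x))"

definition grad_Lp_norm :: "real \<Rightarrow> (real ^ 'n \<Rightarrow> real) \<Rightarrow> ennreal" where
  "grad_Lp_norm p g =
     (let I = (\<integral>\<^sup>+ x. ennreal (norm (grad g x) powr p) \<partial>lborel)
      in if I = \<infinity> then \<infinity> else ennreal (enn2real I powr (1 / p)))"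

definition weighted_norm :: "real \<Rightarrow> (real ^ 'n \<Rightarrow> real) \<Rightarrow> ennreal" where
  "weighted_norm \<gamma> g = (SUP x. ennreal ((1 + norm x) powr \<gamma> * \<bar>g x\<bar>))"

definition X_norm :: "real \<Rightarrow> real \<Rightarrow> (real ^ 'n \<Rightarrow> real) \<Rightarrow> ennreal" where
  "X_norm p \<gamma> g = max (grad_Lp_norm p g) (weighted_norm \<gamma> g)"

end

theory Submission
  imports Defs
begin

definition dU :: "real \<Rightarrow> real \<Rightarrow> real \<Rightarrow> real \<Rightarrow> real" where
  "dU N p \<alpha> r = C_const N p \<alpha> * (- (N - p) / (p + \<alpha>)) *
     (1 + r powr ((p + \<alpha>) / (p - 1))) powr (- (N - p) / (p + \<alpha>) - 1) *
     ((p + \<alpha>) / (p - 1) * r powr ((p + \<alpha>) / (p - 1) - 1))"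

lemma hdiv1: "(B::real) \<noteq> 0 \<Longrightarrow> (x / B) * (B / C) = x / C"
  by simp
lemma hdiv2: "(C::real) \<noteq> 0 \<Longrightarrow> (x / C) / (B / C) = x / B"
  by simp

lemma pos1: "0 < 1 + (r::real) powr e"
  by (simp add: add_pos_nonneg)

lemma pos1ne[simp]: "1 + (r::real) powr e \<noteq> 0"
  using pos1[of r e] by linarith

lemma C_pos: assumes "1 < p" "p < N" "0 < a" shows "0 < C_const N p a"
  using assms unfolding C_const_def by simp

lemma U_deriv: assumes "1 < p" "p < N" "0 < a" "0 < r"
  shows "(U_prof N p a has_real_derivative dU N p a r) (at r)"
  unfolding U_prof_def[abs_def] dU_def
  using assms pos1
  by (auto intro!: derivative_eq_intros simp: field_simps)

lemma U_nonneg: assumes "1 < p" "p < N" "0 < a" shows "0 \<le> U_prof N p a r"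
  using assms C_pos[OF assms] unfolding U_prof_def by simp

lemma powr_le1_neg: "1 \<le> (x::real) \<Longrightarrow> e \<le> 0 \<Longrightarrow> x powr e \<le> 1"
  using powr_mono[of e 0 x] by simp

lemma U_le_C: assumes "1 < p" "p < N" "0 < a" shows "U_prof N p a r \<le> C_const N p a"
proof -
  have "(1 + r powr ((p + a) / (p - 1))) powr (- (N - p) / (p + a)) \<le> 1"
    using assms by (intro powr_le1_neg) (auto simp: divide_nonpos_pos)
  then show ?thesis unfolding U_prof_def using C_pos[OF assms] 
    by (simp add: mult_left_le)
qed

lemma U_decay: assumes "1 < p" "p < N" "0 < a" "0 < r"
  shows "U_prof N p a r \<le> C_const N p a * r powr (- ((N - p) / (p - 1)))"
proof -
  have "(1 + r powr ((p + a) / (p - 1))) powr (- (N - p) / (p + a))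
      \<le> (r powr ((p + a) / (p - 1))) powr (- (N - p) / (p + a))"
    using assms by (intro powr_mono2') (auto simp: divide_nonpos_pos)
  also have "\<dots> = r powr (- ((N - p) / (p - 1)))"
  proof -
    have nz: "p - 1 \<noteq> 0" "p + a \<noteq> 0" using assms by auto
    have "(p + a) / (p - 1) * (- (N - p) / (p + a)) = - ((N - p) / (p - 1))"
      using hdiv1[OF nz(2), of "- (N - p)" "p - 1"] nz by (simp add: mult.commute minus_divide_left)
    then show ?thesis by (simp add: powr_powr)
  qed
  finally show ?thesis unfolding U_prof_def using C_pos[OF assms(1-3)] 
    by (simp add: mult_left_mono)
qed

lemma dU_abs: assumes "1 < p" "p < N" "0 < a" "0 < r"
  shows "\<bar>dU N p a r\<bar> = C_const N p a * ((N - p) / (p - 1)) *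
     ((1 + r powr ((p + a) / (p - 1))) powr (- (N - p) / (p + a) - 1) * r powr ((p + a) / (p - 1) - 1))"
proof -
  have "dU N p a r = - (C_const N p a * ((N - p) / (p - 1)) *
     ((1 + r powr ((p + a) / (p - 1))) powr (- (N - p) / (p + a) - 1) * r powr ((p + a) / (p - 1) - 1)))"
  proof -
    have h: "(- (N - p) / (p + a)) * ((p + a) / (p - 1)) = - ((N - p) / (p - 1))"
      using hdiv1[of "p + a" "- (N - p)" "p - 1"] assms by (simp add: minus_divide_left)
    have g: "\<And>C c1 X A Y :: real. C * c1 * X * (A * Y) = C * (c1 * A) * (X * Y)"
      by (simp add: ac_simps)
    show ?thesis unfolding dU_def g h by simp
  qed
  also have "\<bar>\<dots>\<bar> = C_const N p a * ((N - p) / (p - 1)) *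
     ((1 + r powr ((p + a) / (p - 1))) powr (- (N - p) / (p + a) - 1) * r powr ((p + a) / (p - 1) - 1))"
    using assms C_pos[OF assms(1-3)] by (simp add: abs_mult)
  finally show ?thesis .
qed

lemma dU_bound: assumes "1 < p" "p < N" "0 < a" "0 < r"
  shows "\<bar>dU N p a r\<bar> \<le> C_const N p a * ((N - p) / (p - 1)) * (2 / (1 + r)) powr ((N - p) / (p - 1) + 1)"
proof -
  define A where "A = (p + a) / (p - 1)"
  define k where "k = (N - p) / (p - 1)"
  have A1: "A > 1" using assms by (simp add: A_def field_simps)
  have k0: "k > 0" using assms by (simp add: k_def)
  have nz: "p - 1 \<noteq> 0" "p + a \<noteq> 0" using assms by auto
  have e: "- (N - p) / (p + a) - 1 = - (k / A) - 1" using hdiv2[OF nz(1), of "N - p" "p + a"]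
    using nz by (simp add: A_def k_def minus_divide_left)
  have key: "(1 + r powr A) powr (- (k / A) - 1) * r powr (A - 1) \<le> (2 / (1 + r)) powr (k + 1)"
  proof (cases "r \<le> 1")
    case True
    have "k / A > 0" using k0 A1 by simp
    then have "(1 + r powr A) powr (- (k / A) - 1) \<le> 1"
      by (intro powr_le1_neg) (simp, linarith)
    moreover have "r powr (A - 1) \<le> 1" using True A1 assms by (intro powr_le1) auto
    moreover have "1 \<le> (2 / (1 + r)) powr (k + 1)"
      using True assms k0 by (intro ge_one_powr_ge_zero) auto
    ultimately show ?thesis
      by (meson mult_le_one order.trans powr_ge_zero)
  next
    case False
    have "(1 + r powr A) powr (- (k / A) - 1) \<le> (r powr A) powr (- (k / A) - 1)"
    proof (rule powr_mono2')
      have "0 < k / A" using k0 A1 by simp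
      then show "- (k / A) - 1 \<le> 0" by linarith
    qed (use assms in auto)
    also have "\<dots> = r powr (- k - A)"
    proof -
      have "A \<noteq> 0" using A1 by simp
      then have "A * (- (k / A) - 1) = - k - A" by (simp add: field_simps)
      then show ?thesis by (simp add: powr_powr)
    qed
    finally have "(1 + r powr A) powr (- (k / A) - 1) * r powr (A - 1) \<le> r powr (- k - A) * r powr (A - 1)"
      by (intro mult_right_mono) auto
    also have "\<dots> = r powr (- (k + 1))" by (simp add: powr_add[symmetric])
    also have "\<dots> = (1 / r) powr (k + 1)" using assms powr_minus[of r "k + 1"]
      by (simp add: divide_inverse inverse_powr)
    also have "\<dots> \<le> (2 / (1 + r)) powr (k + 1)"
      using False assms k0 by (intro powr_mono2) (auto simp: field_simps)
    finally show ?thesis .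
  qed
  have key': "(1 + r powr ((p + a) / (p - 1))) powr (- (N - p) / (p + a) - 1) * r powr ((p + a) / (p - 1) - 1)
     \<le> (2 / (1 + r)) powr ((N - p) / (p - 1) + 1)"
    using key[unfolded e[symmetric], unfolded A_def k_def] .
  have c0: "0 \<le> C_const N p a * ((N - p) / (p - 1))"
    using C_pos[OF assms(1-3)] k0 unfolding k_def by (intro mult_nonneg_nonneg) auto
  show ?thesis
    unfolding dU_abs[OF assms] by (rule mult_left_mono[OF key' c0])
qed

lemma int_half:
  fixes q :: real assumes q: "1 < q"
  shows "(\<integral>\<^sup>+t. ennreal ((2 / (1 + t)) powr q) * indicator {0..} t \<partial>lborel) < \<infinity>"
proof -
  define F where "F t = - (2 powr q) * (1 + t) powr (1 - q) / (q - 1)" for t :: real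
  have eq: "(\<integral>\<^sup>+t. ennreal ((2 / (1 + t)) powr q) * indicator {0..} t \<partial>lborel) = ennreal (0 - F 0)"
  proof (rule nn_integral_FTC_atLeast)
    show "(\<lambda>t. (2 / (1 + t)) powr q) \<in> borel_measurable borel" by measurable
    show "DERIV F x :> (2 / (1 + x)) powr q" if "0 \<le> x" for x
    proof -
      have "DERIV F x :> - (2 powr q) * ((1 - q) * (1 + x) powr (1 - q - 1) * 1) / (q - 1)"
        unfolding F_def[abs_def] using that q
        by (auto intro!: derivative_eq_intros)
      moreover have "- (2 powr q) * ((1 - q) * (1 + x) powr (1 - q - 1) * 1) / (q - 1) = (2 / (1 + x)) powr q"
        using q that by (simp add: powr_divide powr_minus field_simps)
      ultimately show ?thesis by simp
    qed
    show "0 \<le> (2 / (1 + x)) powr q" for x by simp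
    show "(F \<longlongrightarrow> 0) at_top"
    proof -
      have l: "((\<lambda>t. (1 + t) powr (1 - q)) \<longlongrightarrow> 0) at_top" using q
        by (intro tendsto_neg_powr filterlim_tendsto_add_at_top[OF tendsto_const filterlim_ident]) auto
      have "((\<lambda>t. - (2 powr q) * (1 + t) powr (1 - q) / (q - 1)) \<longlongrightarrow> - (2 powr q) * 0 / (q - 1)) at_top"
        using q by (intro tendsto_intros l) auto
      then show ?thesis using q by (simp add: F_def[abs_def])
    qed
  qed
  show ?thesis unfolding eq by simp
qed

lemma int_1d:
  fixes q :: real assumes q: "1 < q"
  shows "(\<integral>\<^sup>+t. ennreal ((2 / (1 + \<bar>t\<bar>)) powr q) \<partial>lborel) < \<infinity>"
proof -
  define h where "h t = ennreal ((2 / (1 + t)) powr q) * indicator {0..} t" for t :: real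
  have hm: "h \<in> borel_measurable borel" unfolding h_def by measurable
  have le: "ennreal ((2 / (1 + \<bar>t\<bar>)) powr q) \<le> h t + h (-t)" for t
    unfolding h_def by (cases "t \<ge> 0") auto
  have "(\<integral>\<^sup>+t. ennreal ((2 / (1 + \<bar>t\<bar>)) powr q) \<partial>lborel) \<le> (\<integral>\<^sup>+t. h t + h (-t) \<partial>lborel)"
    by (intro nn_integral_mono le)
  also have "\<dots> = (\<integral>\<^sup>+t. h t \<partial>lborel) + (\<integral>\<^sup>+t. h (-t) \<partial>lborel)"
    using hm by (intro nn_integral_add) auto
  also have "(\<integral>\<^sup>+t. h (-t) \<partial>lborel) = (\<integral>\<^sup>+t. h t \<partial>lborel)"
    using nn_integral_real_affine[OF hm, of "-1" 0] by simp
  also have "(\<integral>\<^sup>+t. h t \<partial>lborel) < \<infinity>" unfolding h_def by (rule int_half[OF q])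
  then have "(\<integral>\<^sup>+t. h t \<partial>lborel) + (\<integral>\<^sup>+t. h t \<partial>lborel) < \<infinity>" by simp
  finally show ?thesis .
qed

lemma int_nd:
  fixes s :: real assumes s: "real DIM('a) < s"
  shows "(\<integral>\<^sup>+x. ennreal ((2 / (1 + norm (x::'a::euclidean_space))) powr s) \<partial>lborel) < \<infinity>"
proof -
  define D where "D = real DIM('a)"
  have D0: "D > 0" unfolding D_def by simp
  define q where "q = s / D"
  have q: "q > 1" using s D0 unfolding q_def D_def by simp
  have le: "ennreal ((2 / (1 + norm x)) powr s) \<le> (\<Prod>b\<in>Basis. ennreal ((2 / (1 + \<bar>x \<bullet> b\<bar>)) powr q))" for x :: 'a
  proof -
    have "(2 / (1 + norm x)) powr s = (\<Prod>b\<in>(Basis::'a set). (2 / (1 + norm x)) powr q)"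
    proof -
      have "(\<Prod>b\<in>(Basis::'a set). (2 / (1 + norm x)) powr q) = ((2 / (1 + norm x)) powr q) ^ DIM('a)"
        by simp
      also have "\<dots> = (2 / (1 + norm x)) powr (real DIM('a) * q)"
        by (rule powr_power) (metis add_pos_nonneg divide_eq_0_iff norm_ge_zero zero_less_one zero_neq_numeral order_less_irrefl)
      also have "real DIM('a) * q = s" using D0 unfolding q_def D_def by simp
      finally show ?thesis by simp
    qed
    also have "\<dots> \<le> (\<Prod>b\<in>Basis. (2 / (1 + \<bar>x \<bullet> b\<bar>)) powr q)"
    proof (rule prod_mono, safe)
      fix b :: 'a assume b: "b \<in> Basis"
      show "0 \<le> (2 / (1 + norm x)) powr q" by simp
      show "(2 / (1 + norm x)) powr q \<le> (2 / (1 + \<bar>x \<bullet> b\<bar>)) powr q"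
        using q Basis_le_norm[OF b, of x]
        by (intro powr_mono2) (auto simp: frac_le add_pos_nonneg)
    qed
    finally show ?thesis by (simp add: prod_ennreal ennreal_leI)
  qed
  have "(\<integral>\<^sup>+x. ennreal ((2 / (1 + norm (x::'a))) powr s) \<partial>lborel)
     \<le> (\<integral>\<^sup>+x. (\<Prod>b\<in>Basis. ennreal ((2 / (1 + \<bar>(x::'a) \<bullet> b\<bar>)) powr q)) \<partial>lborel)"
    by (rule nn_integral_mono) (rule le)
  also have "\<dots> = (\<Prod>b\<in>(Basis::'a set). (\<integral>\<^sup>+t. ennreal ((2 / (1 + \<bar>t\<bar>)) powr q) \<partial>lborel))"
    by (rule nn_integral_lborel_prod) auto
  also have "\<dots> < \<infinity>"
    using int_1d[OF q] by (simp add: power_less_top_ennreal)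
  finally show ?thesis .
qed

lemma grad_eq:
  fixes g :: "real ^ 'n \<Rightarrow> real"
  assumes "GDERIV g x :> G" shows "grad g x = G"
  unfolding grad_def
proof (rule some_equality)
  have d: "(g has_derivative (\<lambda>h. G \<bullet> h)) (at x)"
    using assms unfolding gderiv_def by (simp add: inner_commute)
  then show "(g has_derivative (\<lambda>h. G \<bullet> h)) (at x)" .
  fix G' assume "(g has_derivative (\<lambda>h. G' \<bullet> h)) (at x)"
  from has_derivative_unique[OF this d] have "(\<lambda>h. G' \<bullet> h) = (\<lambda>h. G \<bullet> h)" .
  then have "G' \<bullet> (G' - G) = G \<bullet> (G' - G)" by metis
  then have "(G' - G) \<bullet> (G' - G) = 0" by (simp add: inner_diff_left)
  then show "G' = G" by simp
qed

lemma radial_gderiv: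
  fixes x :: "'a::real_inner"
  assumes "x \<noteq> 0" "(F has_real_derivative D) (at (norm x))"
  shows "GDERIV (\<lambda>y. F (norm y)) x :> D *\<^sub>R sgn x"
  by (rule GDERIV_DERIV_compose[OF GDERIV_norm[OF assms(1)] assms(2)])

lemma grad_fn:
  fixes x :: "real ^ 'n"
  assumes p: "1 < p" "p < N" and pos: "0 < \<beta>" "0 < \<alpha>" "0 < \<epsilon>" and x: "x \<noteq> 0" "norm x \<noteq> 1 / \<epsilon>"
  shows "norm (grad (\<lambda>y. u_trunc N p \<epsilon> \<beta> y - U_fun N p \<alpha> y) x) =
     (if norm x < 1 / \<epsilon> then \<bar>dU N p \<beta> (norm x) - dU N p \<alpha> (norm x)\<bar> else \<bar>dU N p \<alpha> (norm x)\<bar>)"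
proof -
  have nx: "0 < norm x" using x by simp
  have Db: "GDERIV (\<lambda>y. U_prof N p \<beta> (norm y)) x :> dU N p \<beta> (norm x) *\<^sub>R sgn x"
    by (intro radial_gderiv x U_deriv p pos nx)
  have Da: "GDERIV (\<lambda>y. U_prof N p \<alpha> (norm y)) x :> dU N p \<alpha> (norm x) *\<^sub>R sgn x"
    by (intro radial_gderiv x U_deriv p pos nx)
  have ns: "norm (sgn x) = 1" using x by (simp add: norm_sgn)
  show ?thesis
  proof (cases "norm x < 1 / \<epsilon>")
    case True
    define S where "S = {y :: real ^ 'n. norm y < 1 / \<epsilon>}"
    have oS: "open S" unfolding S_def by (intro open_Collect_less continuous_intros)
    have D: "GDERIV (\<lambda>y. U_prof N p \<beta> (norm y) - U_prof N p \<beta> (1 / \<epsilon>) - U_prof N p \<alpha> (norm y)) x :>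
        (dU N p \<beta> (norm x) *\<^sub>R sgn x - 0) - dU N p \<alpha> (norm x) *\<^sub>R sgn x"
      by (intro GDERIV_diff Db Da GDERIV_const)
    have D2: "GDERIV (\<lambda>y. u_trunc N p \<epsilon> \<beta> y - U_fun N p \<alpha> y) x :>
        (dU N p \<beta> (norm x) *\<^sub>R sgn x - 0) - dU N p \<alpha> (norm x) *\<^sub>R sgn x"
      using D unfolding gderiv_def
      by (rule has_derivative_transform_within_open[OF _ oS])
         (use True in \<open>auto simp: S_def u_trunc_def U_fun_def\<close>)
    show ?thesis unfolding grad_eq[OF D2] using True
      by (simp add: scaleR_diff_left[symmetric] ns)
  next
    case False
    then have gt: "1 / \<epsilon> < norm x" using x by simp
    define S where "S = {y :: real ^ 'n. 1 / \<epsilon> < norm y}"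
    have oS: "open S" unfolding S_def by (intro open_Collect_less continuous_intros)
    have D: "GDERIV (\<lambda>y. 0 - U_prof N p \<alpha> (norm y)) x :> 0 - dU N p \<alpha> (norm x) *\<^sub>R sgn x"
      by (intro GDERIV_diff Da GDERIV_const)
    have D2: "GDERIV (\<lambda>y. u_trunc N p \<epsilon> \<beta> y - U_fun N p \<alpha> y) x :>
        0 - dU N p \<alpha> (norm x) *\<^sub>R sgn x"
      using D unfolding gderiv_def
      by (rule has_derivative_transform_within_open[OF _ oS])
         (use gt in \<open>auto simp: S_def u_trunc_def U_fun_def\<close>)
    show ?thesis unfolding grad_eq[OF D2] using False
      by (simp add: ns)
  qed
qed

lemma C_tendsto:
  assumes p: "1 < p" "p < N" and a: "as \<longlonglongrightarrow> a" "0 < a"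
  shows "(\<lambda>n. C_const N p (as n)) \<longlonglongrightarrow> C_const N p a"
  unfolding C_const_def using p a
  by (auto intro!: tendsto_intros)

lemma dU_tendsto:
  assumes p: "1 < p" "p < N" and a: "as \<longlonglongrightarrow> a" "0 < a" and r: "0 < r"
  shows "(\<lambda>n. dU N p (as n) r) \<longlonglongrightarrow> dU N p a r"
  unfolding dU_def C_const_def
  apply (intro tendsto_intros a(1))
  using p a r pos1 apply simp_all
  done

lemma U_tendsto:
  assumes p: "1 < p" "p < N" and a: "as \<longlonglongrightarrow> a" "0 < a" and r: "0 < r"
  shows "(\<lambda>n. U_prof N p (as n) r) \<longlonglongrightarrow> U_prof N p a r"
  unfolding U_prof_def C_const_def
  apply (intro tendsto_intros a(1))
  using p a r pos1 apply simp_all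
  done

lemma sphere_null: "sphere (0::'a::euclidean_space) R \<in> null_sets lborel"
  using negligible_sphere[of "0::'a" R]
  by (auto simp: null_sets_completion_iff negligible_iff_null_sets negligible_convex_frontier)

lemma null0: "{0::'a::euclidean_space} \<union> sphere 0 R \<in> null_sets lborel"
proof -
  have "{0::'a} = sphere 0 0" by auto
  then show ?thesis using sphere_null[of 0] sphere_null[of R] by (metis null_sets.Un)
qed

lemma grad_part:
  fixes \<alpha>s \<epsilon>s :: "nat \<Rightarrow> real"
  assumes p: "1 < p" "p < real CARD('n)" and a: "\<alpha>s \<longlonglongrightarrow> \<alpha>" "0 < \<alpha>"
    and e: "\<And>n. 0 < \<epsilon>s n" "\<epsilon>s \<longlonglongrightarrow> 0"
  shows "(\<lambda>n. grad_Lp_norm p (\<lambda>x::real^'n. u_trunc (real CARD('n)) p (\<epsilon>s n) (\<alpha>s n) x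
            - U_fun (real CARD('n)) p \<alpha> x)) \<longlonglongrightarrow> 0"
proof -
  define N where "N = real CARD('n)"
  note p' = p[folded N_def]
  define k where "k = (N - p) / (p - 1)"
  have k0: "0 < k" using p' unfolding k_def by simp
  define H where "H n x = (if norm x < 1 / \<epsilon>s n then \<bar>dU N p (\<alpha>s n) (norm x) - dU N p \<alpha> (norm x)\<bar>
     else \<bar>dU N p \<alpha> (norm x)\<bar>) powr p" for n and x :: "real^'n"
  define I where "I n = (\<integral>\<^sup>+x. ennreal (norm (grad (\<lambda>x::real^'n. u_trunc N p (\<epsilon>s n) (\<alpha>s n) x
       - U_fun N p \<alpha> x) x) powr p) \<partial>lborel)" for n
  obtain M where M: "\<And>n. n \<ge> M \<Longrightarrow> \<alpha>s n > 0 \<and> C_const N p (\<alpha>s n) < C_const N p \<alpha> + 1"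
  proof -
    have "eventually (\<lambda>n. \<alpha>s n > 0) sequentially" using order_tendstoD(1)[OF a(1) a(2)] .
    moreover have "eventually (\<lambda>n. C_const N p (\<alpha>s n) < C_const N p \<alpha> + 1) sequentially"
      using order_tendstoD(2)[OF C_tendsto[OF p' a], of "C_const N p \<alpha> + 1"] by simp
    ultimately have "eventually (\<lambda>n. \<alpha>s n > 0 \<and> C_const N p (\<alpha>s n) < C_const N p \<alpha> + 1) sequentially"
      by eventually_elim auto
    then show ?thesis using that unfolding eventually_sequentially by blast
  qed
  have IH: "I n = (\<integral>\<^sup>+x. ennreal (H n x) \<partial>lborel)" if "n \<ge> M" for n
  proof -
    have "AE x in lborel. x \<notin> {0::real^'n} \<union> sphere 0 (1 / \<epsilon>s n)" using null0 by (rule AE_not_in)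
    then show ?thesis unfolding I_def
    proof (intro nn_integral_cong_AE, eventually_elim)
      case (elim x)
      then have "x \<noteq> 0" "norm x \<noteq> 1 / \<epsilon>s n" by auto
      from grad_fn[OF p' conjunct1[OF M[OF that]] a(2) e(1) this] show ?case unfolding H_def by simp
    qed
  qed
  define Cb where "Cb = C_const N p \<alpha> + 1"
  define s where "s = (k + 1) * p"
  define K where "K = (2 * Cb * k) powr p"
  define w where "w x = K * (2 / (1 + norm x)) powr s" for x :: "real^'n"
  define u where "u j x = H (j + M) x" for j x
  have Hm: "H n \<in> borel_measurable borel" for n
    unfolding H_def dU_def by measurable
  have Cb: "C_const N p \<alpha> \<le> Cb" unfolding Cb_def by simp
  have bnd: "\<bar>dU N p \<beta> r\<bar> \<le> Cb * k * (2 / (1 + r)) powr (k + 1)"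
    if "0 < \<beta>" "C_const N p \<beta> \<le> Cb" "0 < r" for \<beta> r
  proof -
    have "\<bar>dU N p \<beta> r\<bar> \<le> C_const N p \<beta> * k * (2 / (1 + r)) powr (k + 1)"
      using dU_bound[OF p' that(1) that(3)] unfolding k_def .
    also have "\<dots> \<le> Cb * k * (2 / (1 + r)) powr (k + 1)"
      using that k0 by (intro mult_right_mono) auto
    finally show ?thesis .
  qed
  have bound: "AE x in lborel. norm (u j x) \<le> w x" for j
  proof -
    have "AE x in lborel. x \<notin> {0::real^'n} \<union> sphere 0 1" using null0 by (rule AE_not_in)
    then show ?thesis
    proof eventually_elim
      case (elim x)
      then have r: "0 < norm x" by auto
      have Mj: "\<alpha>s (j + M) > 0" "C_const N p (\<alpha>s (j + M)) \<le> Cb"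
        using M[of "j + M"] unfolding Cb_def by auto
      define V where "V = 2 * Cb * k * (2 / (1 + norm x)) powr (k + 1)"
      have inner: "(if norm x < 1 / \<epsilon>s (j + M) then \<bar>dU N p (\<alpha>s (j + M)) (norm x) - dU N p \<alpha> (norm x)\<bar>
          else \<bar>dU N p \<alpha> (norm x)\<bar>) \<le> V"
        using bnd[OF Mj r] bnd[OF a(2) Cb r] k0 Cb C_pos[OF p' a(2)]
          abs_triangle_ineq4[of "dU N p (\<alpha>s (j + M)) (norm x)" "dU N p \<alpha> (norm x)"]
        unfolding V_def
        by (auto simp: mult_nonneg_nonneg)
      have "norm (u j x) = H (j + M) x" unfolding u_def H_def by simp
      also have "\<dots> \<le> V powr p" unfolding H_def
        using inner p' by (intro powr_mono2) auto
      also have "\<dots> = w x"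
      proof -
        have "0 \<le> 2 * Cb * k" using Cb C_pos[OF p' a(2)] k0 by simp
        then show ?thesis
          unfolding V_def w_def K_def s_def
          by (simp add: powr_mult powr_powr mult.commute)
      qed
      finally show ?case .
    qed
  qed
  have sN: "real DIM(real^'n) < s"
  proof -
    have "N < (k + 1) * p" unfolding k_def using p'
      by (simp add: field_simps)
    then show ?thesis unfolding s_def N_def by simp
  qed
  have wfin: "(\<integral>\<^sup>+x. w x \<partial>lborel) < \<infinity>"
  proof -
    have K0: "0 \<le> K" unfolding K_def by simp
    have "(\<integral>\<^sup>+x. ennreal (w x) \<partial>lborel) = ennreal K * (\<integral>\<^sup>+x. ennreal ((2 / (1 + norm (x::real^'n))) powr s) \<partial>lborel)"
      unfolding w_def using K0 by (simp add: ennreal_mult nn_integral_cmult)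
    also have "\<dots> < \<infinity>" using int_nd[OF sN] by (simp add: ennreal_mult_less_top)
    finally show ?thesis .
  qed
  have conv: "AE x in lborel. (\<lambda>j. u j x) \<longlonglongrightarrow> 0"
  proof -
    have "AE x in lborel. x \<notin> {0::real^'n} \<union> sphere 0 1" using null0 by (rule AE_not_in)
    then show ?thesis
    proof eventually_elim
      case (elim x)
      then have r: "0 < norm x" by auto
      have ev: "eventually (\<lambda>n. \<epsilon>s n < 1 / norm x) sequentially"
        using order_tendstoD(2)[OF e(2)] r by simp
      have E: "eventually (\<lambda>n. H n x = \<bar>dU N p (\<alpha>s n) (norm x) - dU N p \<alpha> (norm x)\<bar> powr p) sequentially"
        using ev
      proof eventually_elim
        case (elim n)
        then have "norm x < 1 / \<epsilon>s n" using e(1)[of n] r by (simp add: field_simps)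
        then show ?case unfolding H_def by simp
      qed
      have T: "(\<lambda>n. \<bar>dU N p (\<alpha>s n) (norm x) - dU N p \<alpha> (norm x)\<bar> powr p) \<longlonglongrightarrow> 0"
      proof (rule tendsto_zero_powrI)
        have "(\<lambda>n. dU N p (\<alpha>s n) (norm x) - dU N p \<alpha> (norm x)) \<longlonglongrightarrow> dU N p \<alpha> (norm x) - dU N p \<alpha> (norm x)"
          by (intro tendsto_intros dU_tendsto[OF p' a r])
        then show "(\<lambda>n. \<bar>dU N p (\<alpha>s n) (norm x) - dU N p \<alpha> (norm x)\<bar>) \<longlonglongrightarrow> 0"
          using tendsto_rabs_zero by fastforce
      qed (use p' in auto)
      have "(\<lambda>n. H n x) \<longlonglongrightarrow> 0"
        by (rule iffD2[OF tendsto_cong[OF E] T])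
      then show ?case unfolding u_def by (rule LIMSEQ_ignore_initial_segment)
    qed
  qed
  have lim: "(\<lambda>j. (\<integral>\<^sup>+x. norm ((\<lambda>x. 0::real) x - u j x) \<partial>lborel)) \<longlonglongrightarrow> 0"
    by (rule nn_integral_dominated_convergence_norm[OF _ _ _ bound wfin conv])
       (auto simp: u_def w_def Hm)
  have "(\<lambda>j. I (j + M)) \<longlonglongrightarrow> 0"
  proof -
    have "I (j + M) = (\<integral>\<^sup>+x. norm ((\<lambda>x. 0::real) x - u j x) \<partial>lborel)" for j
      unfolding IH[of "j + M", OF le_add2] u_def H_def by simp
    then show ?thesis using lim by simp
  qed
  then have I0: "I \<longlonglongrightarrow> 0" by (rule LIMSEQ_offset)
  have ev: "eventually (\<lambda>n. I n < \<infinity>) sequentially"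
    using order_tendstoD(2)[OF I0, of \<infinity>] by simp
  have "(\<lambda>n. ennreal (enn2real (I n) powr (1 / p))) \<longlonglongrightarrow> ennreal 0"
  proof (intro tendsto_ennrealI tendsto_zero_powrI)
    show "(\<lambda>n. enn2real (I n)) \<longlonglongrightarrow> 0" using tendsto_enn2real[of I 0] I0 by simp
  qed (use p' in auto)
  then have lim1: "(\<lambda>n. ennreal (enn2real (I n) powr (1 / p))) \<longlonglongrightarrow> 0" by simp
  have "(\<lambda>n. grad_Lp_norm p (\<lambda>x::real^'n. u_trunc N p (\<epsilon>s n) (\<alpha>s n) x - U_fun N p \<alpha> x)) \<longlonglongrightarrow> 0"
  proof -
    have E2: "eventually (\<lambda>n. grad_Lp_norm p (\<lambda>x::real^'n. u_trunc N p (\<epsilon>s n) (\<alpha>s n) x - U_fun N p \<alpha> x)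
        = ennreal (enn2real (I n) powr (1 / p))) sequentially"
      using ev by eventually_elim (simp add: grad_Lp_norm_def I_def[symmetric] Let_def)
    show ?thesis by (rule iffD2[OF tendsto_cong[OF E2] lim1])
  qed
  then show ?thesis unfolding N_def .
qed

lemma wdecay:
  assumes p: "1 < p" "p < N" and a: "0 < a" and g: "0 < \<gamma>" and r: "1 \<le> r"
  shows "(1 + r) powr \<gamma> * U_prof N p a r \<le> C_const N p a * 2 powr \<gamma> * r powr (\<gamma> - (N - p) / (p - 1))"
proof -
  have "(1 + r) powr \<gamma> \<le> (2 * r) powr \<gamma>" using r g by (intro powr_mono2) auto
  also have "\<dots> = 2 powr \<gamma> * r powr \<gamma>" by (simp add: powr_mult)
  finally have A: "(1 + r) powr \<gamma> \<le> 2 powr \<gamma> * r powr \<gamma>" .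
  have B: "U_prof N p a r \<le> C_const N p a * r powr (- ((N - p) / (p - 1)))"
    using U_decay[OF p a] r by simp
  have "(1 + r) powr \<gamma> * U_prof N p a r \<le> (2 powr \<gamma> * r powr \<gamma>) * (C_const N p a * r powr (- ((N - p) / (p - 1))))"
    using A B U_nonneg[OF p a] by (intro mult_mono) auto
  also have "\<dots> = C_const N p a * 2 powr \<gamma> * (r powr \<gamma> * r powr (- ((N - p) / (p - 1))))"
    by (simp add: ac_simps)
  also have "r powr \<gamma> * r powr (- ((N - p) / (p - 1))) = r powr (\<gamma> - (N - p) / (p - 1))"
    by (simp add: powr_add[symmetric])
  finally show ?thesis .
qed

lemma weighted_core:
  fixes k :: real
  assumes p: "1 < p" "p < N" and a: "0 < \<alpha>" and g: "0 < \<gamma>" "\<gamma> < k" and k: "k = (N - p) / (p - 1)"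
    and b: "0 < \<beta>" "C_const N p \<beta> \<le> Cb" "C_const N p \<alpha> \<le> Cb"
    and R: "1 \<le> R" "Cb * 2 powr \<gamma> * R powr (\<gamma> - k) \<le> e / 3"
    and T: "1 \<le> T" "2 * Cb * 2 powr \<gamma> * T powr (\<gamma> - k) \<le> e / 3"
    and unif: "\<And>r. 0 \<le> r \<Longrightarrow> r \<le> T \<Longrightarrow> (1 + r) powr \<gamma> * \<bar>U_prof N p \<beta> r - U_prof N p \<alpha> r\<bar> \<le> e / 3"
    and r: "0 \<le> r"
  shows "(1 + r) powr \<gamma> * \<bar>(if r \<le> R then U_prof N p \<beta> r - U_prof N p \<beta> R else 0) - U_prof N p \<alpha> r\<bar> \<le> e"
proof -
  have Ub0: "0 \<le> U_prof N p \<beta> t" for t using U_nonneg[OF p b(1)] .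
  have Ua0: "0 \<le> U_prof N p \<alpha> t" for t using U_nonneg[OF p a] .
  have Cb0: "0 \<le> Cb" using C_pos[OF p a] b(3) by simp
  have dec: "(1 + t) powr \<gamma> * U_prof N p a' t \<le> Cb * 2 powr \<gamma> * s powr (\<gamma> - k)"
    if "0 < a'" "C_const N p a' \<le> Cb" "1 \<le> s" "s \<le> t" for a' t s
  proof -
    have "(1 + t) powr \<gamma> * U_prof N p a' t \<le> C_const N p a' * 2 powr \<gamma> * t powr (\<gamma> - k)"
      using wdecay[OF p that(1) g(1), of t] that k by simp
    also have "\<dots> \<le> Cb * 2 powr \<gamma> * t powr (\<gamma> - k)"
      using that by (intro mult_right_mono) auto
    also have "\<dots> \<le> Cb * 2 powr \<gamma> * s powr (\<gamma> - k)"
      using that g Cb0 by (intro mult_left_mono powr_mono2') auto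
    finally show ?thesis .
  qed
  show ?thesis
  proof (cases "r \<le> R")
    case True
    have part1: "(1 + r) powr \<gamma> * \<bar>U_prof N p \<beta> r - U_prof N p \<alpha> r\<bar> \<le> e / 3"
    proof (cases "r \<le> T")
      case True then show ?thesis using unif r by simp
    next
      case False
      have "(1 + r) powr \<gamma> * \<bar>U_prof N p \<beta> r - U_prof N p \<alpha> r\<bar>
          \<le> (1 + r) powr \<gamma> * U_prof N p \<beta> r + (1 + r) powr \<gamma> * U_prof N p \<alpha> r"
        using Ub0[of r] Ua0[of r] by (simp add: distrib_left[symmetric] mult_left_mono abs_le_iff)
      also have "\<dots> \<le> Cb * 2 powr \<gamma> * T powr (\<gamma> - k) + Cb * 2 powr \<gamma> * T powr (\<gamma> - k)"
        using False T by (intro add_mono dec b a) auto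
      also have "\<dots> \<le> e / 3" using T(2) by (simp add: algebra_simps)
      finally show ?thesis .
    qed
    have part2: "(1 + r) powr \<gamma> * U_prof N p \<beta> R \<le> e / 3"
    proof -
      have "(1 + r) powr \<gamma> * U_prof N p \<beta> R \<le> (1 + R) powr \<gamma> * U_prof N p \<beta> R"
        using True r g Ub0 by (intro mult_right_mono powr_mono2) auto
      also have "\<dots> \<le> Cb * 2 powr \<gamma> * R powr (\<gamma> - k)"
        using R by (intro dec b) auto
      finally show ?thesis using R by simp
    qed
    have "(1 + r) powr \<gamma> * \<bar>(U_prof N p \<beta> r - U_prof N p \<beta> R) - U_prof N p \<alpha> r\<bar>
        \<le> (1 + r) powr \<gamma> * (\<bar>U_prof N p \<beta> r - U_prof N p \<alpha> r\<bar> + U_prof N p \<beta> R)"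
      using Ub0[of R] by (intro mult_left_mono) auto
    also have "\<dots> = (1 + r) powr \<gamma> * \<bar>U_prof N p \<beta> r - U_prof N p \<alpha> r\<bar> + (1 + r) powr \<gamma> * U_prof N p \<beta> R"
      by (simp add: distrib_left)
    also have "\<dots> \<le> e / 3 + e / 3" using part1 part2 by simp
    also have "\<dots> \<le> e"
    proof -
      have "0 \<le> e / 3" using part2 by (meson order.trans mult_nonneg_nonneg powr_ge_zero Ub0)
      then show ?thesis by simp
    qed
    finally show ?thesis using True by simp
  next
    case False
    have "(1 + r) powr \<gamma> * U_prof N p \<alpha> r \<le> Cb * 2 powr \<gamma> * R powr (\<gamma> - k)"
      using False R by (intro dec b a) auto
    also have "\<dots> \<le> e" using R
    proof -
      have "0 \<le> Cb * 2 powr \<gamma> * R powr (\<gamma> - k)" using Cb0 by simp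
      then show ?thesis using R by simp
    qed
    finally show ?thesis using False Ua0[of r] by simp
  qed
qed

lemma ennreal_tendsto_0I:
  fixes f :: "'b \<Rightarrow> ennreal"
  assumes "\<And>e. 0 < e \<Longrightarrow> eventually (\<lambda>n. f n \<le> ennreal e) F"
  shows "(f \<longlongrightarrow> 0) F"
proof (rule order_tendstoI)
  fix a :: ennreal assume "a < 0" then show "eventually (\<lambda>n. a < f n) F" by simp
next
  fix a :: ennreal assume a: "0 < a"
  obtain b where b: "0 < b" "b < a" using dense[OF a] by blast
  then have "b \<noteq> \<infinity>" using top.not_eq_extremum by fastforce
  then obtain e where e: "b = ennreal e" "0 \<le> e" by (cases b) auto
  then have "0 < e" using b by simp
  from assms[OF this] show "eventually (\<lambda>n. f n < a) F"
    by eventually_elim (use b e in auto)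
qed

lemma U_cont:
  assumes p: "1 < p" "p < N" and a: "0 < a0"
  shows "continuous_on ({a0..a1} \<times> {0..T}) (\<lambda>z. U_prof N p (fst z) (snd z))"
  unfolding U_prof_def C_const_def
  apply (intro continuous_on_powr' continuous_intros)
  using p a
  apply -
  apply simp_all
  done

lemma weighted_part:
  fixes \<alpha>s \<epsilon>s :: "nat \<Rightarrow> real"
  assumes p: "1 < p" "p < N" and a: "\<alpha>s \<longlonglongrightarrow> \<alpha>" "0 < \<alpha>"
    and e: "\<And>n. 0 < \<epsilon>s n" "\<epsilon>s \<longlonglongrightarrow> 0"
    and g: "0 < \<gamma>" "\<gamma> < (N - p) / (p - 1)"
  shows "(\<lambda>n. weighted_norm \<gamma> (\<lambda>x::real^'n. u_trunc N p (\<epsilon>s n) (\<alpha>s n) x - U_fun N p \<alpha> x)) \<longlonglongrightarrow> 0"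
proof (rule ennreal_tendsto_0I)
  fix e :: real assume e0: "0 < e"
  define k where "k = (N - p) / (p - 1)"
  have gk: "\<gamma> < k" using g(2) unfolding k_def .
  define Cb where "Cb = C_const N p \<alpha> + 1"
  have Cb0: "0 < Cb" using C_pos[OF p a(2)] unfolding Cb_def by simp
  define c where "c = 2 * Cb * 2 powr \<gamma>"
  have "((\<lambda>T. c * T powr (\<gamma> - k)) \<longlongrightarrow> c * 0) at_top"
    using gk by (intro tendsto_intros tendsto_neg_powr filterlim_ident) auto
  then have "eventually (\<lambda>T. c * T powr (\<gamma> - k) < e / 3) at_top"
    using e0 by (intro order_tendstoD(2)) auto
  then obtain T0 where T0: "\<And>T. T \<ge> T0 \<Longrightarrow> c * T powr (\<gamma> - k) < e / 3"
    unfolding eventually_at_top_linorder by blast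
  define T where "T = max 1 T0"
  have T: "1 \<le> T" "2 * Cb * 2 powr \<gamma> * T powr (\<gamma> - k) \<le> e / 3"
    using T0[of T] unfolding T_def c_def by auto
  define S where "S = {\<alpha> / 2 .. 2 * \<alpha>} \<times> {0..T}"
  have "uniformly_continuous_on S (\<lambda>z. U_prof N p (fst z) (snd z))"
    unfolding S_def using p a(2)
    by (intro compact_uniformly_continuous U_cont compact_Times compact_Icc) auto
  moreover have "0 < e / (3 * (1 + T) powr \<gamma>)" using e0 T by simp
  ultimately obtain d where d: "0 < d"
    and dd: "\<And>z z'. z \<in> S \<Longrightarrow> z' \<in> S \<Longrightarrow> dist z' z < d \<Longrightarrow>
       dist (U_prof N p (fst z') (snd z')) (U_prof N p (fst z) (snd z)) < e / (3 * (1 + T) powr \<gamma>)"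
    unfolding uniformly_continuous_on_def by metis
  have ev1: "eventually (\<lambda>n. \<alpha> / 2 < \<alpha>s n) sequentially"
    using a by (intro order_tendstoD(1)) auto
  have ev2: "eventually (\<lambda>n. \<alpha>s n < 2 * \<alpha>) sequentially"
    using a by (intro order_tendstoD(2)) auto
  have ev3: "eventually (\<lambda>n. dist (\<alpha>s n) \<alpha> < d) sequentially"
    using a(1) d by (rule tendstoD)
  have ev4: "eventually (\<lambda>n. C_const N p (\<alpha>s n) < Cb) sequentially"
    unfolding Cb_def by (intro order_tendstoD(2)[OF C_tendsto[OF p a]]) simp
  have ev5: "eventually (\<lambda>n. \<epsilon>s n < 1) sequentially"
    using e by (intro order_tendstoD(2)) auto
  have "(\<lambda>n. Cb * 2 powr \<gamma> * \<epsilon>s n powr (k - \<gamma>)) \<longlonglongrightarrow> Cb * 2 powr \<gamma> * 0"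
    using gk e by (intro tendsto_intros tendsto_zero_powrI) (auto intro: less_imp_le always_eventually)
  then have ev6: "eventually (\<lambda>n. Cb * 2 powr \<gamma> * \<epsilon>s n powr (k - \<gamma>) < e / 3) sequentially"
    using e0 by (intro order_tendstoD(2)) auto
  from ev1 ev2 ev3 ev4 ev5 ev6
  show "eventually (\<lambda>n. weighted_norm \<gamma> (\<lambda>x::real^'n. u_trunc N p (\<epsilon>s n) (\<alpha>s n) x - U_fun N p \<alpha> x) \<le> ennreal e) sequentially"
  proof eventually_elim
    case (elim n)
    define \<beta> where "\<beta> = \<alpha>s n"
    define R where "R = 1 / \<epsilon>s n"
    have b0: "0 < \<beta>" using elim a(2) unfolding \<beta>_def by simp
    have en: "0 < \<epsilon>s n" by (rule e(1))
    have R1: "1 \<le> R" unfolding R_def using elim en by simp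
    have RR: "R powr (\<gamma> - k) = \<epsilon>s n powr (k - \<gamma>)"
      unfolding R_def using en powr_minus_divide[of "\<epsilon>s n" "\<gamma> - k"] by (simp add: powr_divide)
    have R2: "Cb * 2 powr \<gamma> * R powr (\<gamma> - k) \<le> e / 3" unfolding RR using elim by simp
    have unif: "(1 + r) powr \<gamma> * \<bar>U_prof N p \<beta> r - U_prof N p \<alpha> r\<bar> \<le> e / 3"
      if "0 \<le> r" "r \<le> T" for r
    proof -
      have "dist (U_prof N p (fst (\<beta>, r)) (snd (\<beta>, r))) (U_prof N p (fst (\<alpha>, r)) (snd (\<alpha>, r)))
           < e / (3 * (1 + T) powr \<gamma>)"
        using that elim a(2) unfolding \<beta>_def
        by (intro dd) (auto simp: S_def dist_Pair_Pair)
      then have A: "\<bar>U_prof N p \<beta> r - U_prof N p \<alpha> r\<bar> \<le> e / (3 * (1 + T) powr \<gamma>)"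
        by (simp add: dist_real_def)
      have "(1 + r) powr \<gamma> * \<bar>U_prof N p \<beta> r - U_prof N p \<alpha> r\<bar> \<le> (1 + T) powr \<gamma> * (e / (3 * (1 + T) powr \<gamma>))"
        using A that g by (intro mult_mono powr_mono2) auto
      also have "\<dots> = e / 3" using T by simp
      finally show ?thesis .
    qed
    have core: "(1 + norm x) powr \<gamma> * \<bar>u_trunc N p (\<epsilon>s n) (\<alpha>s n) x - U_fun N p \<alpha> x\<bar> \<le> e" for x :: "real^'n"
    proof -
      have "u_trunc N p (\<epsilon>s n) (\<alpha>s n) x - U_fun N p \<alpha> x =
         (if norm x \<le> R then U_prof N p \<beta> (norm x) - U_prof N p \<beta> R else 0) - U_prof N p \<alpha> (norm x)"
        unfolding u_trunc_def U_fun_def R_def \<beta>_def by simp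
      moreover have "(1 + norm x) powr \<gamma> * \<bar>(if norm x \<le> R then U_prof N p \<beta> (norm x) - U_prof N p \<beta> R else 0) - U_prof N p \<alpha> (norm x)\<bar> \<le> e"
        by (rule weighted_core[OF p a(2) g(1) gk k_def b0 _ _ R1 R2 T unif])
           (use elim in \<open>auto simp: \<beta>_def Cb_def\<close>)
      ultimately show ?thesis by simp
    qed
    show ?case unfolding weighted_norm_def
      by (rule SUP_least) (use core in \<open>auto intro: ennreal_leI\<close>)
  qed
qed

theorem proposition3p2:
  fixes p \<alpha> \<gamma> :: real and \<alpha>s \<epsilon>s :: "nat \<Rightarrow> real"
  defines "N \<equiv> real CARD('n)"
  assumes "CARD('n) \<ge> 2"
    and "1 < p" and "p < N"
    and "N * (N - p) / (N * p - (N - p)) < \<gamma>" and "\<gamma> < (N - p) / (p - 1)"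
    and "\<alpha>s \<longlonglongrightarrow> \<alpha>" and "\<alpha> > 0"
    and "\<And>n. \<epsilon>s n > 0" and "\<epsilon>s \<longlonglongrightarrow> 0"
  shows "(\<lambda>n. X_norm p \<gamma>
            (\<lambda>x::real ^ 'n. u_trunc N p (\<epsilon>s n) (\<alpha>s n) x - U_fun N p \<alpha> x))
         \<longlonglongrightarrow> 0"
proof -
  have p: "1 < p" "p < real CARD('n)" using assms(3,4) unfolding N_def by auto
  have N0: "0 < N" unfolding N_def by simp
  have g0: "0 < \<gamma>"
  proof -
    have e: "N * p - (N - p) = N * (p - 1) + p" by (simp add: algebra_simps)
    have "0 < N * (p - 1)" using N0 assms(3) by simp
    then have "0 < N * p - (N - p)" unfolding e using assms(3) by linarith
    moreover have "0 < N * (N - p)" using N0 assms(4) by simp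
    ultimately have "0 < N * (N - p) / (N * p - (N - p))" by (simp add: divide_pos_pos)
    then show ?thesis using assms(5) by linarith
  qed
  have G: "(\<lambda>n. grad_Lp_norm p (\<lambda>x::real^'n. u_trunc N p (\<epsilon>s n) (\<alpha>s n) x - U_fun N p \<alpha> x)) \<longlonglongrightarrow> 0"
    unfolding N_def by (rule grad_part[OF p assms(7,8,9,10)])
  have W: "(\<lambda>n. weighted_norm \<gamma> (\<lambda>x::real^'n. u_trunc N p (\<epsilon>s n) (\<alpha>s n) x - U_fun N p \<alpha> x)) \<longlonglongrightarrow> 0"
    by (rule weighted_part[OF assms(3,4,7,8,9,10) g0 assms(6)])
  have "(\<lambda>n. max (grad_Lp_norm p (\<lambda>x::real^'n. u_trunc N p (\<epsilon>s n) (\<alpha>s n) x - U_fun N p \<alpha> x))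
     (weighted_norm \<gamma> (\<lambda>x::real^'n. u_trunc N p (\<epsilon>s n) (\<alpha>s n) x - U_fun N p \<alpha> x))) \<longlonglongrightarrow> max 0 0"
    by (rule tendsto_max[OF G W])
  then show ?thesis unfolding X_norm_def by simp
qed

end
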